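(* For positive integers $a_1,a_2$ define \[ C_1(a_1,a_2) := \frac{a_1a_2}{3}\sum_{d_1,d_2\geq 1}\frac{\mu(d_1)\mu(d_2)}{d_1 d_2\,\big[d_1/(a_1,d_1),\, d_2/(a_2,d_2)\big]} . \] Then this double series is absolutely convergent, and there is an absolute constant $C>0$ such that for all positive integers $a_1,a_2$ and every real $x\geq 2$, \[ \left|\sum_{n\leq x}\varphi(a_1 n)\varphi(a_2 n) - C_1(a_1,a_2)\,x^3\right| \leq C\,\sigma(a_1a_2)\,x^2(\log x)^2 . \]
   Context: $\varphi$ is Euler's totient function, $\mu$ the Möbius function, $\sigma$ the sum-of-divisors function; $(a,b)$ and $[a,b]$ denote the gcd and lcm of integers $a,b$. The sum over $n\leq x$ is over positive integers $n$. *)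

theory Defs
  imports "HOL-Analysis.Analysis" "HOL-Number_Theory.Number_Theory"
    "HOL-Computational_Algebra.Squarefree"
begin

text \<open>Moebius function: mu(n) = (-1)^k if n is squarefree with k prime factors, 0 otherwise
  (and mu(0) = 0 by convention; only positive arguments are used).\<close>
definition mobius :: "nat \<Rightarrow> int" where
  "mobius n = (if n = 0 \<or> \<not> squarefree n then 0 else (-1) ^ card (prime_factors n))"

definition divisor_sigma :: "nat \<Rightarrow> nat" where
  "divisor_sigma n = (\<Sum>d | d dvd n. d)"

definition C1_term :: "nat \<Rightarrow> nat \<Rightarrow> nat \<times> nat \<Rightarrow> real" where
  "C1_term a1 a2 = (\<lambda>(d1, d2). real_of_int (mobius d1 * mobius d2) /
      (real d1 * real d2 * real (lcm (d1 div gcd a1 d1) (d2 div gcd a2 d2))))"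

definition C1 :: "nat \<Rightarrow> nat \<Rightarrow> real" where
  "C1 a1 a2 = real (a1 * a2) / 3 * infsum (C1_term a1 a2) ({1..} \<times> {1..})"

end

theory Submission
  imports Defs
begin


lemma mobius_mult_coprime:
  assumes "coprime a b"
  shows "mobius (a * b) = mobius a * mobius b"
proof (cases "a = 0 \<or> b = 0")
  case True
  then show ?thesis using assms by (auto simp: mobius_def)
next
  case False
  hence a0: "a \<noteq> 0" and b0: "b \<noteq> 0" by auto
  have sq: "squarefree (a * b) \<longleftrightarrow> squarefree a \<and> squarefree b"
    using assms squarefree_mult_coprime squarefree_multD by blast
  have pf: "prime_factors (a * b) = prime_factors a \<union> prime_factors b"
    using a0 b0 by (rule prime_factors_product)
  have disj: "prime_factors a \<inter> prime_factors b = {}"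
  proof (rule ccontr)
    assume "prime_factors a \<inter> prime_factors b \<noteq> {}"
    then obtain p where "p \<in> prime_factors a" "p \<in> prime_factors b" by blast
    hence "prime p" "p dvd a" "p dvd b" by (auto simp: prime_factors_dvd)
    thus False using assms by (metis coprime_common_divisor not_prime_unit)
  qed
  have "card (prime_factors (a * b)) = card (prime_factors a) + card (prime_factors b)"
    unfolding pf by (rule card_Un_disjoint) (use disj in auto)
  thus ?thesis using a0 b0 sq by (auto simp: mobius_def power_add)
qed

lemma prime_factors_prod_primes:
  fixes X :: "nat set"
  assumes "finite X" "\<And>p. p \<in> X \<Longrightarrow> prime p"
  shows "prime_factors (\<Prod>X) = X"
proof -
  have "prime_factorization (\<Prod>X) = (\<Sum>p\<in>X. prime_factorization p)"
    using assms by (intro prime_factorization_prod) (auto dest: prime_gt_0_nat)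
  also have "\<dots> = (\<Sum>p\<in>X. {#p#})"
    using assms by (intro sum.cong refl) (simp add: prime_factorization_prime)
  also have "\<dots> = mset_set X" using assms(1) by (induction rule: finite_induct) auto
  finally show ?thesis using assms(1) by simp
qed

lemma squarefree_prod_prime_factors:
  fixes f :: nat
  assumes "squarefree f"
  shows "\<Prod>(prime_factors f) = f"
proof -
  have f0: "f > 0" using assms by (auto intro: Nat.gr0I)
  have "f = (\<Prod>p \<in> prime_factors f. p ^ multiplicity p f)"
    using f0 by (rule prime_factorization_nat)
  also have "\<dots> = (\<Prod>p \<in> prime_factors f. p)"
    using assms f0 by (intro prod.cong refl) (simp add: squarefree_factorial_semiring')
  finally show ?thesis by simp
qed

lemma mobius_prod_primes:
  fixes X :: "nat set"
  assumes "finite X" "\<And>p. p \<in> X \<Longrightarrow> prime p"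
  shows "mobius (\<Prod>X) = (-1) ^ card X"
proof -
  have sq: "squarefree (\<Prod>X)"
    using assms by (intro squarefree_prod_coprime) (auto intro: squarefree_prime primes_coprime)
  have "\<Prod>X \<noteq> 0" using assms by (auto dest: prime_gt_0_nat)
  thus ?thesis using sq prime_factors_prod_primes[OF assms] by (simp add: mobius_def)
qed

lemma mobius_sum_prod:
  fixes n :: nat and P :: "nat \<Rightarrow> bool"
  assumes n: "n > 0"
  shows "(\<Sum>f\<in>{f. f dvd n \<and> (\<forall>p\<in>prime_factors f. P p)}. real_of_int (mobius f) / real f)
       = (\<Prod>p\<in>{p\<in>prime_factors n. P p}. 1 - 1 / real p)"
proof -
  define Q where "Q = {p\<in>prime_factors n. P p}"
  define S where "S = {f. f dvd n \<and> (\<forall>p\<in>prime_factors f. P p)}"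
  have finQ: "finite Q" unfolding Q_def by auto
  have Qp: "\<And>p. p \<in> Q \<Longrightarrow> prime p" unfolding Q_def by (auto simp: prime_factors_dvd)
  have finS: "finite S" unfolding S_def using n by (auto intro: finite_subset[OF _ finite_divisors_nat])
  have "(\<Prod>p\<in>Q. 1 - 1 / real p) = (\<Prod>p\<in>Q. (- 1 / real p) + 1)" by simp
  also have "\<dots> = (\<Sum>X\<in>Pow Q. (\<Prod>p\<in>X. - 1 / real p) * (\<Prod>p\<in>Q-X. 1))"
    by (rule prod_add[OF finQ])
  also have "\<dots> = (\<Sum>X\<in>Pow Q. real_of_int (mobius (\<Prod>X)) / real (\<Prod>X))"
  proof (intro sum.cong refl)
    fix X assume X: "X \<in> Pow Q"
    hence finX: "finite X" using finQ finite_subset by auto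
    have Xp: "\<And>p. p \<in> X \<Longrightarrow> prime p" using X Qp by auto
    have "(\<Prod>p\<in>X. - 1 / real p) = (\<Prod>p\<in>X. (-1::real)) / (\<Prod>p\<in>X. real p)"
      by (rule prod_dividef)
    also have "\<dots> = (-1) ^ card X / real (\<Prod>X)" by simp
    finally show "(\<Prod>p\<in>X. - 1 / real p) * (\<Prod>p\<in>Q-X. 1) = real_of_int (mobius (\<Prod>X)) / real (\<Prod>X)"
      using mobius_prod_primes[OF finX Xp] by simp
  qed
  also have "\<dots> = (\<Sum>f\<in>Prod ` Pow Q. real_of_int (mobius f) / real f)"
  proof (rule sum.reindex[symmetric, unfolded comp_def])
    show "inj_on Prod (Pow Q)"
    proof (rule inj_onI)
      fix X Y assume "X \<in> Pow Q" "Y \<in> Pow Q" "\<Prod>X = \<Prod>Y"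
      thus "X = Y" using prime_factors_prod_primes[of X] prime_factors_prod_primes[of Y] finQ Qp
        by (metis PowD finite_subset subsetD)
    qed
  qed
  also have "\<dots> = (\<Sum>f\<in>S. real_of_int (mobius f) / real f)"
  proof (rule sum.mono_neutral_left[OF finS])
    show "Prod ` Pow Q \<subseteq> S"
    proof
      fix f assume "f \<in> Prod ` Pow Q"
      then obtain X where X: "X \<subseteq> Q" "f = \<Prod>X" by auto
      hence finX: "finite X" using finQ finite_subset by auto
      have Xp: "\<And>p. p \<in> X \<Longrightarrow> prime p" using X Qp by auto
      have pf: "prime_factors f = X" using X prime_factors_prod_primes[OF finX Xp] by simp
      have "\<Prod>X dvd \<Prod>Q" using X finQ by (simp add: prod_dvd_prod_subset)
      also have "\<Prod>Q dvd n"
      proof -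
        have sq: "squarefree (\<Prod>Q)" using finQ Qp
          by (intro squarefree_prod_coprime) (auto intro: squarefree_prime primes_coprime)
        have "\<Prod>Q \<noteq> 0" using finQ Qp by (auto dest: prime_gt_0_nat)
        show ?thesis
        proof (rule multiplicity_le_imp_dvd)
          show "\<Prod>Q \<noteq> 0" by fact
          fix p :: nat assume p: "prime p"
          show "multiplicity p (\<Prod>Q) \<le> multiplicity p n"
          proof (cases "p \<in> Q")
            case True
            have "multiplicity p (\<Prod>Q) \<le> 1" using sq \<open>\<Prod>Q \<noteq> 0\<close> p
              by (simp add: squarefree_factorial_semiring'')
            moreover have "multiplicity p n \<ge> 1" using True n unfolding Q_def
              by (auto simp: prime_factors_multiplicity)
            ultimately show ?thesis by linarith
          next
            case False
            hence "p \<notin> prime_factors (\<Prod>Q)" using prime_factors_prod_primes[OF finQ Qp] by simp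
            hence "multiplicity p (\<Prod>Q) = 0" using \<open>\<Prod>Q \<noteq> 0\<close> p
              by (simp add: prime_factors_multiplicity)
            thus ?thesis by simp
          qed
        qed
      qed
      finally have "f dvd n" using X by simp
      moreover have "\<forall>p\<in>prime_factors f. P p" using pf X unfolding Q_def by auto
      ultimately show "f \<in> S" unfolding S_def by auto
    qed
  next
    show "\<forall>f\<in>S - Prod ` Pow Q. real_of_int (mobius f) / real f = 0"
    proof
      fix f assume f: "f \<in> S - Prod ` Pow Q"
      show "real_of_int (mobius f) / real f = 0"
      proof (cases "squarefree f")
        case True
        have "f = \<Prod>(prime_factors f)" using True squarefree_prod_prime_factors by simp
        moreover have "prime_factors f \<subseteq> Q"
        proof
          fix p assume p: "p \<in> prime_factors f"
          have "f dvd n" "\<forall>p\<in>prime_factors f. P p" using f unfolding S_def by auto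
          thus "p \<in> Q" using p n unfolding Q_def
            using dvd_prime_factors[of n f] by auto
        qed
        ultimately have "f \<in> Prod ` Pow Q" by blast
        thus ?thesis using f by blast
      qed (simp add: mobius_def)
    qed
  qed
  finally show ?thesis unfolding Q_def S_def by simp
qed

lemma coprime_iff_pf:
  fixes f a :: nat
  assumes "f > 0"
  shows "coprime f a \<longleftrightarrow> (\<forall>p\<in>prime_factors f. \<not> p dvd a)"
proof
  assume c: "coprime f a"
  show "\<forall>p\<in>prime_factors f. \<not> p dvd a"
  proof (intro ballI notI)
    fix p assume "p \<in> prime_factors f" "p dvd a"
    hence "prime p" "p dvd f" "p dvd a" by (auto simp: prime_factors_dvd)
    from coprime_common_divisor[OF c \<open>p dvd f\<close> \<open>p dvd a\<close>] \<open>prime p\<close> show False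
      using not_prime_unit by blast
  qed
next
  assume h: "\<forall>p\<in>prime_factors f. \<not> p dvd a"
  show "coprime f a"
  proof (rule ccontr)
    assume "\<not> coprime f a"
    hence "gcd f a \<noteq> 1" using coprime_iff_gcd_eq_1 by blast
    then obtain p where p: "prime p" "p dvd gcd f a" using prime_factor_nat[of "gcd f a"] by blast
    hence "p dvd f" "p dvd a" by (meson dvd_trans gcd_dvd1, meson dvd_trans gcd_dvd2)
    hence "p \<in> prime_factors f" using p assms by (simp add: in_prime_factors_iff)
    thus False using h \<open>p dvd a\<close> by blast
  qed
qed

lemma mobius_sum_totient:
  fixes a :: nat
  assumes "a > 0"
  shows "(\<Sum>e\<in>{e. e dvd a}. real_of_int (mobius e) / real e) = real (totient a) / real a"
proof -
  have "(\<Sum>e\<in>{e. e dvd a}. real_of_int (mobius e) / real e)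
      = (\<Sum>f\<in>{f. f dvd a \<and> (\<forall>p\<in>prime_factors f. True)}. real_of_int (mobius f) / real f)" by simp
  also have "\<dots> = (\<Prod>p\<in>{p\<in>prime_factors a. True}. 1 - 1 / real p)"
    by (rule mobius_sum_prod[OF assms])
  also have "\<dots> = real (totient a) / real a" using assms by (simp add: totient_formula2)
  finally show ?thesis .
qed

lemma totient_mult_formula:
  fixes a n :: nat
  assumes "a > 0" "n > 0"
  shows "real (totient (a * n)) = real (totient a) * real n *
           (\<Sum>f\<in>{f. f dvd n \<and> coprime f a}. real_of_int (mobius f) / real f)"
proof -
  have set_eq: "{f. f dvd n \<and> coprime f a} = {f. f dvd n \<and> (\<forall>p\<in>prime_factors f. \<not> p dvd a)}"
  proof -
    have "f dvd n \<Longrightarrow> f > 0" for f using assms by (auto intro: Nat.gr0I)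
    thus ?thesis using coprime_iff_pf by blast
  qed
  have pfan: "prime_factors (a * n) = prime_factors a \<union> {p\<in>prime_factors n. \<not> p dvd a}"
  proof -
    have "prime_factors (a*n) = prime_factors a \<union> prime_factors n"
      using assms by (simp add: prime_factors_product)
    moreover have "\<forall>p\<in>prime_factors n. p dvd a \<longrightarrow> p \<in> prime_factors a"
      using assms by (auto simp: in_prime_factors_iff)
    ultimately show ?thesis by blast
  qed
  have disj: "prime_factors a \<inter> {p\<in>prime_factors n. \<not> p dvd a} = {}"
    by blast
  have "real (totient (a * n)) = real (a * n) * (\<Prod>p\<in>prime_factors (a * n). 1 - 1 / real p)"
    by (rule totient_formula2)
  also have "(\<Prod>p\<in>prime_factors (a * n). 1 - 1 / real p) =
       (\<Prod>p\<in>prime_factors a. 1 - 1 / real p) * (\<Prod>p\<in>{p\<in>prime_factors n. \<not> p dvd a}. 1 - 1 / real p)"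
    unfolding pfan by (rule prod.union_disjoint) (use disj in auto)
  also have "(\<Prod>p\<in>{p\<in>prime_factors n. \<not> p dvd a}. 1 - 1 / real p) =
      (\<Sum>f\<in>{f. f dvd n \<and> coprime f a}. real_of_int (mobius f) / real f)"
    unfolding set_eq by (rule mobius_sum_prod[OF assms(2), symmetric])
  also have "real (totient a) = real a * (\<Prod>p\<in>prime_factors a. 1 - 1 / real p)"
    by (rule totient_formula2)
  ultimately show ?thesis by (simp add: algebra_simps)
qed



lemma ln_step_bound:
  fixes x :: real
  assumes "x \<ge> 2"
  shows "ln x - ln (x - 1) \<le> 1 / (x - 1)"
proof -
  have "ln (x / (x - 1)) \<le> x / (x - 1) - 1" using assms by (intro ln_le_minus_one) auto
  moreover have "ln (x / (x - 1)) = ln x - ln (x - 1)" using assms by (simp add: ln_div)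
  moreover have "x / (x - 1) - 1 = 1 / (x - 1)" using assms by (simp add: field_simps)
  ultimately show ?thesis by simp
qed

lemma harm_bound:
  assumes "n \<ge> 1"
  shows "(\<Sum>k\<in>{1..n}. 1 / real k) \<le> 1 + ln (real n)"
  using assms
proof (induction n rule: dec_induct)
  case base
  then show ?case by simp
next
  case (step n)
  have "1 / real (Suc n) \<le> ln (real (Suc n)) - ln (real n)"
  proof -
    have "ln (real (Suc n)) - ln (real n) \<ge> 1 / real (Suc n)"
    proof -
      have "ln (real n / real (Suc n)) \<le> real n / real (Suc n) - 1"
        using step by (intro ln_le_minus_one) auto
      moreover have "ln (real n / real (Suc n)) = ln (real n) - ln (real (Suc n))"
        using step by (simp add: ln_div)
      moreover have "real n / real (Suc n) - 1 = - 1 / real (Suc n)"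
        by (simp add: field_simps)
      ultimately show ?thesis by simp
    qed
    thus ?thesis by simp
  qed
  thus ?case using step by (simp add: sum.cl_ivl_Suc)
qed

lemma tele_sq:
  assumes "m \<ge> 1"
  shows "(\<Sum>k\<in>{m+1..M}. 1 / (real k)^2) \<le> 1 / real m"
proof -
  have "\<forall>M\<ge>m. (\<Sum>k\<in>{m+1..M}. 1 / (real k)^2) \<le> 1 / real m - 1 / real M"
  proof (intro allI impI)
    fix M assume "m \<le> M"
    thus "(\<Sum>k\<in>{m+1..M}. 1 / (real k)^2) \<le> 1 / real m - 1 / real M"
    proof (induction M rule: dec_induct)
      case base
      then show ?case by simp
    next
      case (step M)
      have M1: "real M \<ge> 1" using step assms by simp
      have "1 / (real (Suc M))^2 \<le> 1 / (real M * real (Suc M))"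
        using M1 by (intro divide_left_mono mult_pos_pos) (auto simp: power2_eq_square)
      also have "\<dots> = 1 / real M - 1 / real (Suc M)" using M1 by (simp add: field_simps)
      finally have "1 / (real (Suc M))^2 \<le> 1 / real M - 1 / real (Suc M)" .
      thus ?case using step by (simp add: sum.cl_ivl_Suc)
    qed
  qed
  show ?thesis
  proof (cases "M \<ge> m")
    case True
    thus ?thesis using \<open>\<forall>M\<ge>m. _\<close> by (smt (verit) of_nat_0_le_iff divide_nonneg_nonneg)
  next
    case False
    thus ?thesis by simp
  qed
qed

lemma tele_log_step:
  fixes x :: real
  assumes "x \<ge> 2"
  shows "(2 + ln x) / x^2 \<le> (4 + ln (x - 1)) / (x - 1) - (4 + ln x) / x"
proof -
  define D where "D = ln x - ln (x - 1)"
  have D: "D \<le> 1 / (x - 1)" unfolding D_def using ln_step_bound[OF assms] .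
  have xD: "x * D \<le> 2"
  proof -
    have "x * D \<le> x * (1 / (x - 1))" using D assms by (intro mult_left_mono) auto
    also have "\<dots> \<le> 2" using assms by (simp add: field_simps)
    finally show ?thesis .
  qed
  have lnx: "ln x \<ge> 0" using assms by simp
  have eq: "(4 + ln (x - 1)) / (x - 1) - (4 + ln x) / x = (4 + ln x - x * D) / (x * (x - 1))"
    unfolding D_def using assms by (simp add: field_simps)
  have "(2 + ln x) / x^2 \<le> (2 + ln x) / (x * (x - 1))"
    using assms lnx by (intro divide_left_mono) (auto simp: power2_eq_square)
  also have "\<dots> \<le> (4 + ln x - x * D) / (x * (x - 1))"
    using assms xD by (intro divide_right_mono) auto
  finally show ?thesis using eq by simp
qed

lemma tele_log:
  assumes "N \<ge> 1"
  shows "(\<Sum>j\<in>{N+1..M}. (2 + ln (real j)) / (real j)^2) \<le> (4 + ln (real N)) / real N"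
proof -
  have "\<forall>M\<ge>N. (\<Sum>j\<in>{N+1..M}. (2 + ln (real j)) / (real j)^2)
           \<le> (4 + ln (real N)) / real N - (4 + ln (real M)) / real M"
  proof (intro allI impI)
    fix M assume "N \<le> M"
    thus "(\<Sum>j\<in>{N+1..M}. (2 + ln (real j)) / (real j)^2)
           \<le> (4 + ln (real N)) / real N - (4 + ln (real M)) / real M"
    proof (induction M rule: dec_induct)
      case base
      then show ?case by simp
    next
      case (step M)
      have "real (Suc M) \<ge> 2" using step assms by simp
      from tele_log_step[OF this]
      have "(2 + ln (real (Suc M))) / (real (Suc M))^2
          \<le> (4 + ln (real M)) / real M - (4 + ln (real (Suc M))) / real (Suc M)" by simp
      thus ?case using step by (simp add: sum.cl_ivl_Suc)
    qed
  qed
  show ?thesis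
  proof (cases "M \<ge> N")
    case True
    have "(4 + ln (real M)) / real M \<ge> 0" using True assms by simp
    thus ?thesis using True \<open>\<forall>M\<ge>N. _\<close> by force
  next
    case False
    thus ?thesis using assms by simp
  qed
qed

definition kmaj :: "nat \<Rightarrow> nat \<Rightarrow> real" where
  "kmaj f1 f2 = 1 / (real f1 * real f2 * real (max f1 f2))"

lemma kmaj_nonneg: "kmaj f1 f2 \<ge> 0" by (simp add: kmaj_def)

lemma kmaj_sym: "kmaj f1 f2 = kmaj f2 f1" by (simp add: kmaj_def max.commute mult.commute)

lemma inner_bound:
  assumes "f1 \<ge> 1"
  shows "(\<Sum>f2\<in>{1..M}. 1 / (real f2 * real (max f1 f2))) \<le> (2 + ln (real f1)) / real f1"
proof -
  define K where "K = max M f1"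
  have "(\<Sum>f2\<in>{1..M}. 1 / (real f2 * real (max f1 f2))) \<le> (\<Sum>f2\<in>{1..K}. 1 / (real f2 * real (max f1 f2)))"
    unfolding K_def by (intro sum_mono2) auto
  also have "{1..K} = {1..f1} \<union> {f1+1..K}" unfolding K_def using assms by auto
  also have "(\<Sum>f2\<in>{1..f1} \<union> {f1+1..K}. 1 / (real f2 * real (max f1 f2)))
      = (\<Sum>f2\<in>{1..f1}. 1 / (real f2 * real (max f1 f2))) + (\<Sum>f2\<in>{f1+1..K}. 1 / (real f2 * real (max f1 f2)))"
    by (rule sum.union_disjoint) auto
  also have "(\<Sum>f2\<in>{1..f1}. 1 / (real f2 * real (max f1 f2))) = (1 / real f1) * (\<Sum>f2\<in>{1..f1}. 1 / real f2)"
    by (subst sum_distrib_left, intro sum.cong refl) (auto simp: max_def)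
  also have "(\<Sum>f2\<in>{f1+1..K}. 1 / (real f2 * real (max f1 f2))) = (\<Sum>f2\<in>{f1+1..K}. 1 / (real f2)^2)"
    by (intro sum.cong refl) (auto simp: max_def power2_eq_square)
  also have "(1 / real f1) * (\<Sum>f2\<in>{1..f1}. 1 / real f2) \<le> (1 / real f1) * (1 + ln (real f1))"
    using assms by (intro mult_left_mono harm_bound) auto
  also have "(\<Sum>f2\<in>{f1+1..K}. 1 / (real f2)^2) \<le> 1 / real f1" using assms by (rule tele_sq)
  also have "(1 / real f1) * (1 + ln (real f1)) + 1 / real f1 = (2 + ln (real f1)) / real f1"
    using assms by (simp add: field_simps)
  finally show ?thesis by simp
qed

lemma rows_bound:
  assumes "N \<ge> 1"
  shows "(\<Sum>f1\<in>{N+1..M}. \<Sum>f2\<in>{1..M}. kmaj f1 f2) \<le> (4 + ln (real N)) / real N"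
proof -
  have "(\<Sum>f1\<in>{N+1..M}. \<Sum>f2\<in>{1..M}. kmaj f1 f2) \<le> (\<Sum>f1\<in>{N+1..M}. (2 + ln (real f1)) / (real f1)^2)"
  proof (rule sum_mono)
    fix f1 assume f1: "f1 \<in> {N+1..M}"
    hence f1p: "real f1 > 0" "f1 \<ge> 1" using assms by auto
    have "(\<Sum>f2\<in>{1..M}. kmaj f1 f2) = (1 / real f1) * (\<Sum>f2\<in>{1..M}. 1 / (real f2 * real (max f1 f2)))"
      unfolding kmaj_def by (subst sum_distrib_left, intro sum.cong refl) (simp add: field_simps)
    also have "\<dots> \<le> (1 / real f1) * ((2 + ln (real f1)) / real f1)"
      using f1p by (intro mult_left_mono inner_bound) auto
    also have "\<dots> = (2 + ln (real f1)) / (real f1)^2" by (simp add: power2_eq_square)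
    finally show "(\<Sum>f2\<in>{1..M}. kmaj f1 f2) \<le> (2 + ln (real f1)) / (real f1)^2" .
  qed
  also have "\<dots> \<le> (4 + ln (real N)) / real N" using assms by (rule tele_log)
  finally show ?thesis .
qed

lemma box_bound:
  "(\<Sum>f1\<in>{1..M}. \<Sum>f2\<in>{1..M}. kmaj f1 f2) \<le> 6"
proof (cases "M \<ge> 1")
  case True
  have "{1..M} = insert 1 {1+1..M}" using True by auto
  hence "(\<Sum>f1\<in>{1..M}. \<Sum>f2\<in>{1..M}. kmaj f1 f2)
       = (\<Sum>f2\<in>{1..M}. kmaj 1 f2) + (\<Sum>f1\<in>{1+1..M}. \<Sum>f2\<in>{1..M}. kmaj f1 f2)"
    by (simp del: One_nat_def)
  also have "(\<Sum>f2\<in>{1..M}. kmaj 1 f2) \<le> 2"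
  proof -
    have "(\<Sum>f2\<in>{1..M}. kmaj 1 f2) = (\<Sum>f2\<in>{1..M}. 1 / (real f2 * real (max 1 f2)))"
      unfolding kmaj_def by simp
    also have "\<dots> \<le> (2 + ln (real (1::nat))) / real (1::nat)" by (rule inner_bound) simp
    finally show ?thesis by simp
  qed
  also have "(\<Sum>f1\<in>{1+1..M}. \<Sum>f2\<in>{1..M}. kmaj f1 f2) \<le> (4 + ln (real (1::nat))) / real (1::nat)"
    by (rule rows_bound) simp
  finally show ?thesis by simp
qed simp

lemma finite_box:
  fixes F :: "(nat \<times> nat) set"
  assumes "finite F"
  obtains M where "F \<subseteq> UNIV \<times> {..M}" "F \<subseteq> {..M} \<times> UNIV"
proof -
  define M where "M = Max (insert 0 (fst ` F \<union> snd ` F))"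
  have "\<And>p. p \<in> F \<Longrightarrow> fst p \<le> M \<and> snd p \<le> M"
    unfolding M_def using assms by (auto intro!: Max_ge)
  thus ?thesis using that[of M] by fastforce
qed

lemma kmaj_finite_bound:
  assumes "finite F" "F \<subseteq> {1..} \<times> {1..}"
  shows "(\<Sum>p\<in>F. kmaj (fst p) (snd p)) \<le> 6"
proof -
  obtain M where M: "F \<subseteq> UNIV \<times> {..M}" "F \<subseteq> {..M} \<times> UNIV" using finite_box[OF assms(1)] by blast
  have sub: "F \<subseteq> {1..M} \<times> {1..M}" using M assms(2) by auto
  have "(\<Sum>p\<in>F. kmaj (fst p) (snd p)) \<le> (\<Sum>p\<in>{1..M} \<times> {1..M}. kmaj (fst p) (snd p))"
    using sub by (intro sum_mono2) (auto simp: kmaj_nonneg)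
  also have "\<dots> = (\<Sum>f1\<in>{1..M}. \<Sum>f2\<in>{1..M}. kmaj f1 f2)"
    by (subst sum.cartesian_product) (simp add: case_prod_beta)
  also have "\<dots> \<le> 6" by (rule box_bound)
  finally show ?thesis .
qed

lemma kmaj_tail_bound:
  assumes "finite F" "F \<subseteq> {1..} \<times> {1..} - {1..N} \<times> {1..N}" "N \<ge> 1"
  shows "(\<Sum>p\<in>F. kmaj (fst p) (snd p)) \<le> 2 * ((4 + ln (real N)) / real N)"
proof -
  obtain M where M: "F \<subseteq> UNIV \<times> {..M}" "F \<subseteq> {..M} \<times> UNIV" using finite_box[OF assms(1)] by blast
  define A where "A = {N+1..M} \<times> {1..M}"
  define B where "B = {1..M} \<times> {N+1..M}"
  have sub: "F \<subseteq> A \<union> B"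
  proof (rule subsetI)
    fix p assume p: "p \<in> F"
    obtain a b where ab: "p = (a,b)" by (cases p)
    have "a \<le> M" "b \<le> M" using M p ab by auto
    moreover have "a \<ge> 1" "b \<ge> 1" "\<not> (a \<le> N \<and> b \<le> N)" using assms(2) p ab by auto
    ultimately show "p \<in> A \<union> B" unfolding A_def B_def ab by auto
  qed
  have "(\<Sum>p\<in>F. kmaj (fst p) (snd p)) \<le> (\<Sum>p\<in>A \<union> B. kmaj (fst p) (snd p))"
    using sub unfolding A_def B_def by (intro sum_mono2) (auto simp: kmaj_nonneg)
  also have "\<dots> \<le> (\<Sum>p\<in>A. kmaj (fst p) (snd p)) + (\<Sum>p\<in>B. kmaj (fst p) (snd p))"
  proof -
    have "0 \<le> (\<Sum>p\<in>A \<inter> B. kmaj (fst p) (snd p))" by (intro sum_nonneg) (simp add: kmaj_nonneg)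
    thus ?thesis unfolding A_def B_def by (subst sum_Un) auto
  qed
  also have "(\<Sum>p\<in>A. kmaj (fst p) (snd p)) = (\<Sum>f1\<in>{N+1..M}. \<Sum>f2\<in>{1..M}. kmaj f1 f2)"
    unfolding A_def by (subst sum.cartesian_product) (simp add: case_prod_beta)
  also have "(\<Sum>p\<in>B. kmaj (fst p) (snd p)) = (\<Sum>f1\<in>{1..M}. \<Sum>f2\<in>{N+1..M}. kmaj f1 f2)"
    unfolding B_def by (subst sum.cartesian_product) (simp add: case_prod_beta)
  also have "\<dots> = (\<Sum>f2\<in>{N+1..M}. \<Sum>f1\<in>{1..M}. kmaj f2 f1)"
    by (subst sum.swap) (simp add: kmaj_sym)
  also have "(\<Sum>f1\<in>{N+1..M}. \<Sum>f2\<in>{1..M}. kmaj f1 f2) + (\<Sum>f2\<in>{N+1..M}. \<Sum>f1\<in>{1..M}. kmaj f2 f1)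
     \<le> (4 + ln (real N)) / real N + (4 + ln (real N)) / real N"
    using rows_bound[OF assms(3)] by (intro add_mono) auto
  finally show ?thesis by simp
qed



definition hfun :: "nat \<times> nat \<Rightarrow> real" where
  "hfun = (\<lambda>(f1, f2). real_of_int (mobius f1 * mobius f2) / (real f1 * real f2 * real (lcm f1 f2)))"

definition Fc :: "nat \<Rightarrow> nat \<Rightarrow> (nat \<times> nat) set" where
  "Fc a1 a2 = {(f1, f2). f1 \<ge> 1 \<and> f2 \<ge> 1 \<and> coprime f1 a1 \<and> coprime f2 a2}"

lemma abs_mobius_le: "\<bar>real_of_int (mobius n)\<bar> \<le> 1"
  by (simp add: mobius_def)

lemma max_le_lcm:
  fixes f1 f2 :: nat
  assumes "f1 \<ge> 1" "f2 \<ge> 1"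
  shows "max f1 f2 \<le> lcm f1 f2"
proof -
  have "lcm f1 f2 > 0" using assms by (simp add: lcm_pos_nat)
  hence "f1 \<le> lcm f1 f2" "f2 \<le> lcm f1 f2" by (simp_all add: dvd_imp_le)
  thus ?thesis by simp
qed

lemma hfun_bound:
  assumes "fst p \<ge> 1" "snd p \<ge> 1"
  shows "norm (hfun p) \<le> kmaj (fst p) (snd p)"
proof -
  obtain f1 f2 where p: "p = (f1, f2)" by (cases p)
  have f: "f1 \<ge> 1" "f2 \<ge> 1" using assms p by auto
  have L: "real (max f1 f2) \<le> real (lcm f1 f2)" using max_le_lcm[OF f] by linarith
  have pos: "real f1 * real f2 * real (max f1 f2) > 0" using f by simp
  have "\<bar>real_of_int (mobius f1 * mobius f2)\<bar> \<le> 1"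
    using abs_mobius_le[of f1] abs_mobius_le[of f2]
    by (simp add: abs_mult mult_le_one)
  hence "norm (hfun p) \<le> 1 / (real f1 * real f2 * real (lcm f1 f2))"
    unfolding p hfun_def using f by (simp add: abs_mult divide_right_mono)
  also have "\<dots> \<le> 1 / (real f1 * real f2 * real (max f1 f2))"
    using pos L f by (intro divide_left_mono mult_left_mono) auto
  finally show ?thesis unfolding p kmaj_def by simp
qed

lemma hfun_abs_summable: "Infinite_Sum.abs_summable_on hfun ({1..} \<times> {1..})"
proof (rule nonneg_bdd_above_summable_on)
  show "bdd_above (sum (\<lambda>x. norm (hfun x)) ` {F. F \<subseteq> {1..} \<times> {1..} \<and> finite F})"
  proof (rule bdd_aboveI2)
    fix F :: "(nat \<times> nat) set" assume F: "F \<in> {F. F \<subseteq> {1..} \<times> {1..} \<and> finite F}"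
    have "(\<Sum>x\<in>F. norm (hfun x)) \<le> (\<Sum>p\<in>F. kmaj (fst p) (snd p))"
      using F by (intro sum_mono hfun_bound) auto
    also have "\<dots> \<le> 6" using F by (intro kmaj_finite_bound) auto
    finally show "(\<Sum>x\<in>F. norm (hfun x)) \<le> 6" .
  qed
qed simp

lemma C1_term_bound:
  assumes "a1 \<ge> 1" "a2 \<ge> 1" "fst p \<ge> 1" "snd p \<ge> 1"
  shows "norm (C1_term a1 a2 p) \<le> real (a1 * a2) * kmaj (fst p) (snd p)"
proof -
  obtain d1 d2 where p: "p = (d1, d2)" by (cases p)
  have d: "d1 \<ge> 1" "d2 \<ge> 1" using assms p by auto
  define g1 where "g1 = d1 div gcd a1 d1"
  define g2 where "g2 = d2 div gcd a2 d2"
  have d1eq: "d1 = gcd a1 d1 * g1" unfolding g1_def by simp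
  have d2eq: "d2 = gcd a2 d2 * g2" unfolding g2_def by simp
  have g1: "g1 \<ge> 1" using d(1) d1eq by (cases g1) auto
  have g2: "g2 \<ge> 1" using d(2) d2eq by (cases g2) auto
  note g = g1 g2
  have gc1: "gcd a1 d1 \<le> a1" using assms by (simp add: gcd_le1_nat)
  have gc2: "gcd a2 d2 \<le> a2" using assms by (simp add: gcd_le1_nat)
  have "g1 \<le> lcm g1 g2" "g2 \<le> lcm g1 g2" using max_le_lcm[OF g] by auto
  have "d1 \<le> a1 * lcm g1 g2"
  proof -
    have "d1 \<le> a1 * g1" using d1eq gc1 by (metis mult_le_mono1)
    also have "\<dots> \<le> a1 * lcm g1 g2" using \<open>g1 \<le> lcm g1 g2\<close> by simp
    finally show ?thesis .
  qed
  also have "\<dots> \<le> a1 * a2 * lcm g1 g2" using assms by simp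
  finally have m1: "d1 \<le> a1 * a2 * lcm g1 g2" .
  have "d2 \<le> a2 * lcm g1 g2"
  proof -
    have "d2 \<le> a2 * g2" using d2eq gc2 by (metis mult_le_mono1)
    also have "\<dots> \<le> a2 * lcm g1 g2" using \<open>g2 \<le> lcm g1 g2\<close> by simp
    finally show ?thesis .
  qed
  also have "\<dots> \<le> a1 * a2 * lcm g1 g2" using assms by simp
  finally have m2: "d2 \<le> a1 * a2 * lcm g1 g2" .
  have M: "real (max d1 d2) \<le> real (a1 * a2) * real (lcm g1 g2)"
    using m1 m2 by (simp del: of_nat_mult add: of_nat_mult[symmetric])
  have lpos: "real (lcm g1 g2) > 0" using g by (simp add: lcm_pos_nat)
  have "\<bar>real_of_int (mobius d1 * mobius d2)\<bar> \<le> 1"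
    using abs_mobius_le[of d1] abs_mobius_le[of d2]
    by (simp add: abs_mult mult_le_one)
  hence "norm (C1_term a1 a2 p) \<le> 1 / (real d1 * real d2 * real (lcm g1 g2))"
    unfolding p C1_term_def g1_def g2_def using d by (simp add: abs_mult divide_right_mono)
  also have "\<dots> \<le> real (a1 * a2) / (real d1 * real d2 * real (max d1 d2))"
  proof -
    have pos: "real d1 * real d2 > 0" using d by simp
    have "1 / (real d1 * real d2 * real (lcm g1 g2)) = real (a1*a2) / (real d1 * real d2 * (real (a1*a2) * real (lcm g1 g2)))"
      using assms by (simp add: field_simps)
    also have "\<dots> \<le> real (a1 * a2) / (real d1 * real d2 * real (max d1 d2))"
      using pos M d lpos assms by (intro divide_left_mono mult_left_mono mult_pos_pos) auto
    finally show ?thesis .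
  qed
  finally show ?thesis unfolding p kmaj_def by simp
qed

lemma C1_term_abs_summable:
  assumes "a1 \<ge> 1" "a2 \<ge> 1"
  shows "Infinite_Sum.abs_summable_on (C1_term a1 a2) ({1..} \<times> {1..})"
proof (rule nonneg_bdd_above_summable_on)
  show "bdd_above (sum (\<lambda>x. norm (C1_term a1 a2 x)) ` {F. F \<subseteq> {1..} \<times> {1..} \<and> finite F})"
  proof (rule bdd_aboveI2)
    fix F :: "(nat \<times> nat) set" assume F: "F \<in> {F. F \<subseteq> {1..} \<times> {1..} \<and> finite F}"
    have "(\<Sum>x\<in>F. norm (C1_term a1 a2 x)) \<le> (\<Sum>p\<in>F. real (a1 * a2) * kmaj (fst p) (snd p))"
      using F assms by (intro sum_mono C1_term_bound) auto
    also have "\<dots> = real (a1 * a2) * (\<Sum>p\<in>F. kmaj (fst p) (snd p))" by (simp add: sum_distrib_left)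
    also have "\<dots> \<le> real (a1 * a2) * 6" using F by (intro mult_left_mono kmaj_finite_bound) auto
    finally show "(\<Sum>x\<in>F. norm (C1_term a1 a2 x)) \<le> real (a1 * a2) * 6" .
  qed
qed simp



lemma gcd_ef:
  fixes a e f :: nat
  assumes "e dvd a" "coprime f a"
  shows "gcd a (e * f) = e"
proof -
  have "coprime a f" using assms(2) by (simp add: coprime_commute)
  hence "gcd a (e * f) = gcd a e" by (rule gcd_mult_right_right_cancel)
  also have "\<dots> = e" using assms(1) by (simp add: gcd_proj2_if_dvd)
  finally show ?thesis .
qed

lemma sqf_split:
  fixes a d :: nat
  assumes "squarefree d" "a > 0"
  shows "coprime (d div gcd a d) a" "d div gcd a d \<ge> 1" "gcd a d dvd a"
    "d = gcd a d * (d div gcd a d)"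
proof -
  have d0: "d > 0" using assms(1) by (auto intro: Nat.gr0I)
  show deq: "d = gcd a d * (d div gcd a d)" by simp
  show "gcd a d dvd a" by simp
  show "d div gcd a d \<ge> 1" using d0 deq by (cases "d div gcd a d") auto
  show "coprime (d div gcd a d) a"
  proof (rule ccontr)
    define f where "f = d div gcd a d"
    assume "\<not> coprime (d div gcd a d) a"
    hence "gcd f a \<noteq> 1" unfolding f_def using coprime_iff_gcd_eq_1 by blast
    then obtain p where p: "prime p" "p dvd gcd f a" using prime_factor_nat[of "gcd f a"] by blast
    hence pf: "p dvd f" "p dvd a" by (meson dvd_trans gcd_dvd1, meson dvd_trans gcd_dvd2)
    have "f dvd d" unfolding f_def using deq by (metis dvd_triv_right)
    hence "p dvd d" using pf by (meson dvd_trans)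
    hence pg: "p dvd gcd a d" using pf by simp
    have "p * p dvd gcd a d * f" by (rule mult_dvd_mono[OF pg pf(1)])
    hence "p ^ 2 dvd d" using deq unfolding f_def by (simp add: power2_eq_square)
    hence "p dvd 1" using squarefreeD[OF assms(1)] by blast
    thus False using p by simp
  qed
qed

definition ccoef :: "nat \<times> nat \<Rightarrow> real" where
  "ccoef = (\<lambda>(e1, e2). real_of_int (mobius e1) / real e1 * (real_of_int (mobius e2) / real e2))"

definition Phi :: "(nat \<times> nat) \<times> (nat \<times> nat) \<Rightarrow> nat \<times> nat" where
  "Phi = (\<lambda>((e1, e2), (f1, f2)). (e1 * f1, e2 * f2))"

definition uu :: "(nat \<times> nat) \<times> (nat \<times> nat) \<Rightarrow> real" where
  "uu = (\<lambda>(e, f). ccoef e * hfun f)"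

lemma C1_reindex:
  assumes a: "a1 \<ge> 1" "a2 \<ge> 1"
  shows "(C1_term a1 a2 has_sum
     (real (totient a1) / real a1 * (real (totient a2) / real a2) * infsum hfun (Fc a1 a2))) ({1..} \<times> {1..})"
proof -
  define E where "E = {e. e dvd a1} \<times> {e. e dvd a2}"
  define D where "D = E \<times> Fc a1 a2"
  define H where "H = infsum hfun (Fc a1 a2)"
  have finE: "finite E" unfolding E_def using a
    by (intro finite_cartesian_product finite_divisors_nat) auto
  have Fsub: "Fc a1 a2 \<subseteq> {1..} \<times> {1..}" unfolding Fc_def by auto
  have hsum: "(hfun has_sum H) (Fc a1 a2)"
  proof -
    have "hfun summable_on ({1..} \<times> {1..})"
      using hfun_abs_summable by (rule abs_summable_summable)
    hence "hfun summable_on (Fc a1 a2)" using Fsub by (rule summable_on_subset_banach)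
    thus ?thesis unfolding H_def by simp
  qed
  have Csum: "C1_term a1 a2 summable_on ({1..} \<times> {1..})"
    using C1_term_abs_summable[OF a] by (rule abs_summable_summable)
  have key: "C1_term a1 a2 (Phi x) = uu x" if x: "x \<in> D" for x
  proof -
    obtain e1 e2 f1 f2 where xe: "x = ((e1, e2), (f1, f2))" by (metis prod.exhaust)
    have e: "e1 dvd a1" "e2 dvd a2" using x xe unfolding D_def E_def by auto
    have f: "f1 \<ge> 1" "f2 \<ge> 1" "coprime f1 a1" "coprime f2 a2" using x xe unfolding D_def Fc_def by auto
    have e0: "e1 > 0" "e2 > 0" using e a by (auto intro: Nat.gr0I)
    have g1: "(e1 * f1) div gcd a1 (e1 * f1) = f1" using gcd_ef[OF e(1) f(3)] e0 by simp
    have g2: "(e2 * f2) div gcd a2 (e2 * f2) = f2" using gcd_ef[OF e(2) f(4)] e0 by simp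
    have cp1: "coprime e1 f1" using coprime_divisors[OF e(1) dvd_refl, of f1] f(3)
      by (simp add: coprime_commute)
    have cp2: "coprime e2 f2" using coprime_divisors[OF e(2) dvd_refl, of f2] f(4)
      by (simp add: coprime_commute)
    have m1: "mobius (e1 * f1) = mobius e1 * mobius f1" by (rule mobius_mult_coprime[OF cp1])
    have m2: "mobius (e2 * f2) = mobius e2 * mobius f2" by (rule mobius_mult_coprime[OF cp2])
    show ?thesis unfolding xe Phi_def uu_def C1_term_def ccoef_def hfun_def
      using g1 g2 m1 m2 e0 f by (simp add: field_simps)
  qed
  have inj: "inj_on Phi D"
  proof (rule inj_onI)
    fix x y assume x: "x \<in> D" and y: "y \<in> D" and eq: "Phi x = Phi y"
    obtain e1 e2 f1 f2 where xe: "x = ((e1, e2), (f1, f2))" by (metis prod.exhaust)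
    obtain e1' e2' f1' f2' where ye: "y = ((e1', e2'), (f1', f2'))" by (metis prod.exhaust)
    have e: "e1 dvd a1" "e2 dvd a2" "e1' dvd a1" "e2' dvd a2"
      using x xe y ye unfolding D_def E_def by auto
    have f: "coprime f1 a1" "coprime f2 a2" "coprime f1' a1" "coprime f2' a2"
      using x xe y ye unfolding D_def Fc_def by auto
    have e0: "e1 > 0" "e2 > 0" using e a by (auto intro: Nat.gr0I)
    have p1: "e1 * f1 = e1' * f1'" "e2 * f2 = e2' * f2'" using eq unfolding xe ye Phi_def by auto
    have "e1 = e1'" using gcd_ef[OF e(1) f(1)] gcd_ef[OF e(3) f(3)] p1(1) by simp
    moreover have "e2 = e2'" using gcd_ef[OF e(2) f(2)] gcd_ef[OF e(4) f(4)] p1(2) by simp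
    ultimately show "x = y" using p1 e0 unfolding xe ye by simp
  qed
  have img_sub: "Phi ` D \<subseteq> {1..} \<times> {1..}"
  proof
    fix d assume "d \<in> Phi ` D"
    then obtain x where x: "x \<in> D" "d = Phi x" by blast
    obtain e1 e2 f1 f2 where xe: "x = ((e1, e2), (f1, f2))" by (metis prod.exhaust)
    have e: "e1 dvd a1" "e2 dvd a2" using x xe unfolding D_def E_def by auto
    have f: "f1 \<ge> 1" "f2 \<ge> 1" using x xe unfolding D_def Fc_def by auto
    have e0: "e1 > 0" "e2 > 0" using e a by (auto intro: Nat.gr0I)
    show "d \<in> {1..} \<times> {1..}" using x xe e0 f unfolding Phi_def by (auto simp: Suc_le_eq)
  qed
  have outside: "C1_term a1 a2 d = 0" if d: "d \<in> {1..} \<times> {1..} - Phi ` D" for d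
  proof -
    obtain d1 d2 where de: "d = (d1, d2)" by (cases d)
    show ?thesis
    proof (cases "squarefree d1 \<and> squarefree d2")
      case True
      define x where "x = ((gcd a1 d1, gcd a2 d2), (d1 div gcd a1 d1, d2 div gcd a2 d2))"
      have s1: "coprime (d1 div gcd a1 d1) a1" "d1 div gcd a1 d1 \<ge> 1" "gcd a1 d1 dvd a1"
          "d1 = gcd a1 d1 * (d1 div gcd a1 d1)" using sqf_split[of d1 a1] True a by auto
      have s2: "coprime (d2 div gcd a2 d2) a2" "d2 div gcd a2 d2 \<ge> 1" "gcd a2 d2 dvd a2"
          "d2 = gcd a2 d2 * (d2 div gcd a2 d2)" using sqf_split[of d2 a2] True a by auto
      have "x \<in> D" unfolding x_def D_def E_def Fc_def using s1 s2 by auto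
      moreover have "Phi x = d" unfolding x_def Phi_def de using s1(4) s2(4) by simp
      ultimately have "d \<in> Phi ` D" by blast
      thus ?thesis using d by blast
    next
      case False
      thus ?thesis unfolding de C1_term_def by (auto simp: mobius_def)
    qed
  qed
  have usum: "uu summable_on D"
  proof -
    have "C1_term a1 a2 summable_on (Phi ` D)" using Csum img_sub by (rule summable_on_subset_banach)
    hence "(C1_term a1 a2 \<circ> Phi) summable_on D" using summable_on_reindex[OF inj] by blast
    thus ?thesis using key by (subst summable_on_cong[symmetric]) auto
  qed
  have uhas: "(uu has_sum (sum ccoef E * H)) D"
  proof -
    have "(uu has_sum (sum ccoef E * H)) (Sigma E (\<lambda>_. Fc a1 a2))"
    proof (rule has_sum_SigmaI)
      fix e assume "e \<in> E"
      show "((\<lambda>f. uu (e, f)) has_sum (ccoef e * H)) (Fc a1 a2)"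
        unfolding uu_def using hsum by (simp add: has_sum_cmult_right)
    next
      show "((\<lambda>e. ccoef e * H) has_sum sum ccoef E * H) E"
        using finE by (simp add: sum_distrib_right)
    next
      show "uu summable_on Sigma E (\<lambda>_. Fc a1 a2)" using usum unfolding D_def by simp
    qed
    thus ?thesis unfolding D_def by simp
  qed
  have "(C1_term a1 a2 has_sum (sum ccoef E * H)) (Phi ` D)"
  proof -
    have "((C1_term a1 a2 \<circ> Phi) has_sum (sum ccoef E * H)) D"
      using uhas key by (subst has_sum_cong) auto
    thus ?thesis using has_sum_reindex[OF inj] by blast
  qed
  hence res: "(C1_term a1 a2 has_sum (sum ccoef E * H)) ({1..} \<times> {1..})"
    by (rule has_sum_cong_neutral[THEN iffD1, rotated -1]) (use outside img_sub in auto)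
  have "sum ccoef E = (\<Sum>e\<in>{e. e dvd a1}. real_of_int (mobius e) / real e) *
                      (\<Sum>e\<in>{e. e dvd a2}. real_of_int (mobius e) / real e)"
    unfolding E_def ccoef_def by (simp add: sum_product sum.cartesian_product)
  also have "\<dots> = real (totient a1) / real a1 * (real (totient a2) / real a2)"
    using a by (simp add: mobius_sum_totient)
  finally show ?thesis using res unfolding H_def by simp
qed



lemma sum_squares_real: "(\<Sum>k\<in>{1..t}. (real k)^2) = real t * (real t + 1) * (2 * real t + 1) / 6"
  by (induction t) (auto simp: sum.cl_ivl_Suc field_simps power2_eq_square)

lemma mult_sum:
  fixes m N :: nat
  assumes "m \<ge> 1"
  shows "(\<Sum>n\<in>{1..N}. if m dvd n then (real n)^2 else 0) = (real m)^2 * (\<Sum>k\<in>{1..N div m}. (real k)^2)"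
proof -
  have "(\<Sum>n\<in>{1..N}. if m dvd n then (real n)^2 else 0) = (\<Sum>n\<in>{n\<in>{1..N}. m dvd n}. (real n)^2)"
    by (simp only: sum.inter_filter[OF finite_atLeastAtMost])
  also have "{n\<in>{1..N}. m dvd n} = (\<lambda>k. m * k) ` {1..N div m}"
  proof
    show "{n \<in> {1..N}. m dvd n} \<subseteq> (\<lambda>k. m * k) ` {1..N div m}"
    proof
      fix n assume n: "n \<in> {n \<in> {1..N}. m dvd n}"
      then obtain k where k: "n = m * k" by auto
      have "k \<ge> 1" using n k by (cases k) auto
      moreover have "k \<le> N div m" using n k assms
        by (metis (no_types, lifting) atLeastAtMost_iff div_le_mono mem_Collect_eq nonzero_mult_div_cancel_left not_one_le_zero)
      ultimately show "n \<in> (\<lambda>k. m * k) ` {1..N div m}" using k by auto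
    qed
  next
    show "(\<lambda>k. m * k) ` {1..N div m} \<subseteq> {n \<in> {1..N}. m dvd n}"
    proof
      fix n assume "n \<in> (\<lambda>k. m * k) ` {1..N div m}"
      then obtain k where k0: "k \<in> {1..N div m}" "n = m * k" by blast
      hence k: "n = m * k" "1 \<le> k" "k \<le> N div m" by auto
      have "m * k \<le> m * (N div m)" using k by simp
      also have "\<dots> \<le> N" by simp
      finally have "n \<le> N" using k by simp
      moreover have "n \<ge> 1" using k assms by simp
      ultimately show "n \<in> {n \<in> {1..N}. m dvd n}" using k by auto
    qed
  qed
  also have "(\<Sum>n\<in>(\<lambda>k. m * k) ` {1..N div m}. (real n)^2) = (\<Sum>k\<in>{1..N div m}. (real (m * k))^2)"
    using assms by (subst sum.reindex) (auto simp: inj_on_def)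
  also have "\<dots> = (real m)^2 * (\<Sum>k\<in>{1..N div m}. (real k)^2)"
    by (simp add: sum_distrib_left power_mult_distrib)
  finally show ?thesis .
qed

lemma cube_err:
  fixes y :: real and t :: nat
  assumes "real t \<le> y" "y < real t + 1"
  shows "\<bar>real t * (real t + 1) * (2 * real t + 1) / 6 - y^3 / 3\<bar> \<le> y^2"
proof -
  define s where "s = real t"
  have s0: "s \<ge> 0" unfolding s_def by simp
  have sy: "s \<le> y" "y < s + 1" using assms unfolding s_def by auto
  have y0: "y \<ge> 0" using s0 sy by simp
  define P where "P = s * (s + 1) * (2 * s + 1) / 6"
  have up: "P - y^3 / 3 \<le> y^2"
  proof (cases "t = 0")
    case True
    hence "s = 0" unfolding s_def by simp
    hence "P = 0" unfolding P_def by simp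
    moreover have "y^3 \<ge> 0" using y0 by simp
    moreover have "y^2 \<ge> 0" by simp
    ultimately have "- (y^3/3) \<le> y^2" by linarith
    thus ?thesis using \<open>P = 0\<close> by simp
  next
    case False
    hence s1: "s \<ge> 1" unfolding s_def by simp
    have "s^3 \<le> y^3" using sy s0 by (intro power_mono) auto
    moreover have "s^2 \<le> y^2" using sy s0 by (intro power_mono) auto
    moreover have "s \<le> s^2" using s1 by (simp add: power2_eq_square)
    moreover have "y^2 \<ge> 0" by simp
    moreover have "P = s^3/3 + s^2/2 + s/6"
      unfolding P_def by (simp add: field_simps power2_eq_square power3_eq_cube)
    ultimately show ?thesis by linarith
  qed
  have lo: "y^3 / 3 - P \<le> y^2"
  proof -
    have "P \<ge> s^3 / 3" unfolding P_def using s0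
      by (simp add: field_simps power2_eq_square power3_eq_cube)
    moreover have "y^3 - s^3 \<le> 3 * y^2"
    proof -
      have "y^3 - s^3 = (y - s) * (y^2 + y * s + s^2)" by (simp add: field_simps power2_eq_square power3_eq_cube)
      also have "\<dots> \<le> 1 * (y^2 + y * s + s^2)"
        using sy s0 y0 by (intro mult_right_mono) auto
      also have "\<dots> \<le> 3 * y^2"
      proof -
        have "y * s \<le> y * y" using sy y0 by (intro mult_left_mono) auto
        moreover have "s^2 \<le> y^2" using sy s0 by (intro power_mono) auto
        ultimately show ?thesis by (simp add: power2_eq_square)
      qed
      finally show ?thesis .
    qed
    ultimately show ?thesis by linarith
  qed
  have "\<bar>P - y^3/3\<bar> \<le> y^2" using up lo by linarith
  thus ?thesis unfolding P_def s_def .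
qed

lemma Q_err:
  fixes x :: real and m :: nat
  assumes "m \<ge> 1" "x \<ge> 0"
  shows "\<bar>(\<Sum>n\<in>{1..nat \<lfloor>x\<rfloor>}. if m dvd n then (real n)^2 else 0) - x^3 / (3 * real m)\<bar> \<le> x^2"
proof -
  define N where "N = nat \<lfloor>x\<rfloor>"
  define t where "t = N div m"
  define y where "y = x / real m"
  have m0: "real m > 0" using assms by simp
  have Nx: "real N \<le> x" "x < real N + 1" unfolding N_def using assms by linarith+
  have "real t * real m \<le> real N"
  proof -
    have "t * m \<le> N" unfolding t_def by simp
    thus ?thesis by (metis of_nat_le_iff of_nat_mult)
  qed
  hence ty: "real t \<le> y" unfolding y_def using m0 Nx by (simp add: field_simps)
  have "N mod m < m" using assms by simp
  moreover have "N = t * m + N mod m" unfolding t_def by simp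
  ultimately have "N + 1 \<le> (t + 1) * m" by (simp add: algebra_simps)
  hence "real (N + 1) \<le> real ((t + 1) * m)" by (simp only: of_nat_le_iff)
  hence "real N + 1 \<le> (real t + 1) * real m" by (simp add: algebra_simps)
  hence yt: "y < real t + 1" unfolding y_def using m0 Nx by (simp add: field_simps)
  define Pt where "Pt = real t * (real t + 1) * (2 * real t + 1) / 6"
  define Sm where "Sm = (\<Sum>n\<in>{1..N}. if m dvd n then (real n)^2 else 0)"
  have A: "Sm = (real m)^2 * Pt"
    using mult_sum[OF assms(1), of N] sum_squares_real[of t] unfolding t_def Sm_def Pt_def by simp
  have B: "x^3 / (3 * real m) = (real m)^2 * (y^3 / 3)"
    unfolding y_def using m0 by (simp add: field_simps power2_eq_square power3_eq_cube)
  have "Sm - x^3 / (3 * real m) = (real m)^2 * (Pt - y^3 / 3)"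
    by (simp only: A B right_diff_distrib)
  hence "\<bar>(\<Sum>n\<in>{1..N}. if m dvd n then (real n)^2 else 0) - x^3 / (3 * real m)\<bar>
      = (real m)^2 * \<bar>real t * (real t + 1) * (2 * real t + 1) / 6 - y^3 / 3\<bar>"
    unfolding Sm_def Pt_def by (simp add: abs_mult)
  also have "\<dots> \<le> (real m)^2 * y^2" using cube_err[OF ty yt] by (intro mult_left_mono) auto
  also have "\<dots> = x^2" unfolding y_def using m0 by (simp add: field_simps power2_eq_square)
  finally show ?thesis unfolding N_def .
qed



definition Tf :: "nat \<Rightarrow> nat \<Rightarrow> nat \<Rightarrow> nat \<Rightarrow> real" where
  "Tf a1 a2 f1 f2 = (if coprime f1 a1 \<and> coprime f2 a2
      then real_of_int (mobius f1 * mobius f2) / (real f1 * real f2) else 0)"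

definition Qm :: "nat \<Rightarrow> nat \<Rightarrow> real" where
  "Qm N m = (\<Sum>n\<in>{1..N}. if m dvd n then (real n)^2 else 0)"

definition sfun :: "nat \<Rightarrow> nat \<Rightarrow> nat \<Rightarrow> nat \<Rightarrow> real" where
  "sfun a N n f = (if f dvd n \<and> coprime f a then real_of_int (mobius f) / real f else 0)"

lemma s_as_box:
  assumes "n \<in> {1..N}"
  shows "(\<Sum>f\<in>{f. f dvd n \<and> coprime f a}. real_of_int (mobius f) / real f) = (\<Sum>f\<in>{1..N}. sfun a N n f)"
proof -
  have "{f. f dvd n \<and> coprime f a} = {f\<in>{1..N}. f dvd n \<and> coprime f a}"
  proof (intro equalityI subsetI)
    fix f assume f: "f \<in> {f. f dvd n \<and> coprime f a}"
    have "n > 0" using assms by simp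
    hence "f \<le> n" "f > 0" using f by (auto intro: dvd_imp_le Nat.gr0I)
    thus "f \<in> {f\<in>{1..N}. f dvd n \<and> coprime f a}" using f assms by auto
  qed auto
  thus ?thesis unfolding sfun_def by (simp only: sum.inter_filter[OF finite_atLeastAtMost])
qed

lemma sfun_prod:
  "sfun a1 N n f1 * sfun a2 N n f2 = Tf a1 a2 f1 f2 * (if lcm f1 f2 dvd n then 1 else 0)"
  unfolding sfun_def Tf_def by auto

lemma S_formula:
  assumes a: "a1 \<ge> 1" "a2 \<ge> 1"
  shows "(\<Sum>n\<in>{1..N}. real (totient (a1 * n) * totient (a2 * n)))
    = real (totient a1) * real (totient a2) * (\<Sum>f1\<in>{1..N}. \<Sum>f2\<in>{1..N}. Tf a1 a2 f1 f2 * Qm N (lcm f1 f2))"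
proof -
  define c where "c = real (totient a1) * real (totient a2)"
  have step: "real (totient (a1 * n) * totient (a2 * n))
      = c * (\<Sum>f1\<in>{1..N}. \<Sum>f2\<in>{1..N}. Tf a1 a2 f1 f2 * (if lcm f1 f2 dvd n then (real n)^2 else 0))"
    if n: "n \<in> {1..N}" for n
  proof -
    have n0: "n > 0" using n by simp
    have "real (totient (a1 * n) * totient (a2 * n)) = real (totient (a1 * n)) * real (totient (a2 * n))" by simp
    also have "\<dots> = (real (totient a1) * real n * (\<Sum>f1\<in>{1..N}. sfun a1 N n f1)) *
                   (real (totient a2) * real n * (\<Sum>f2\<in>{1..N}. sfun a2 N n f2))"
      using totient_mult_formula[of a1 n] totient_mult_formula[of a2 n] a n0 s_as_box[OF n, of a1] s_as_box[OF n, of a2]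
      by simp
    also have "\<dots> = c * ((real n)^2 * ((\<Sum>f1\<in>{1..N}. sfun a1 N n f1) * (\<Sum>f2\<in>{1..N}. sfun a2 N n f2)))"
      unfolding c_def by (simp add: power2_eq_square algebra_simps)
    also have "(\<Sum>f1\<in>{1..N}. sfun a1 N n f1) * (\<Sum>f2\<in>{1..N}. sfun a2 N n f2)
        = (\<Sum>f1\<in>{1..N}. \<Sum>f2\<in>{1..N}. sfun a1 N n f1 * sfun a2 N n f2)"
      by (simp add: sum_product)
    also have "(real n)^2 * \<dots> = (\<Sum>f1\<in>{1..N}. \<Sum>f2\<in>{1..N}. Tf a1 a2 f1 f2 * (if lcm f1 f2 dvd n then (real n)^2 else 0))"
      by (simp add: sum_distrib_left sfun_prod, intro sum.cong refl, auto)
    finally show ?thesis .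
  qed
  have "(\<Sum>n\<in>{1..N}. real (totient (a1 * n) * totient (a2 * n)))
      = (\<Sum>n\<in>{1..N}. c * (\<Sum>f1\<in>{1..N}. \<Sum>f2\<in>{1..N}. Tf a1 a2 f1 f2 * (if lcm f1 f2 dvd n then (real n)^2 else 0)))"
    by (rule sum.cong[OF refl step])
  also have "\<dots> = c * (\<Sum>f1\<in>{1..N}. \<Sum>f2\<in>{1..N}. \<Sum>n\<in>{1..N}. Tf a1 a2 f1 f2 * (if lcm f1 f2 dvd n then (real n)^2 else 0))"
  proof -
    have sw: "(\<Sum>n\<in>B. \<Sum>f1\<in>B. \<Sum>f2\<in>B. G f1 f2 n) = (\<Sum>f1\<in>B. \<Sum>f2\<in>B. \<Sum>n\<in>B. G f1 f2 n)"
      for B :: "nat set" and G :: "nat \<Rightarrow> nat \<Rightarrow> nat \<Rightarrow> real"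
    proof -
      have "(\<Sum>n\<in>B. \<Sum>f1\<in>B. \<Sum>f2\<in>B. G f1 f2 n) = (\<Sum>f1\<in>B. \<Sum>n\<in>B. \<Sum>f2\<in>B. G f1 f2 n)"
        by (rule sum.swap)
      also have "\<dots> = (\<Sum>f1\<in>B. \<Sum>f2\<in>B. \<Sum>n\<in>B. G f1 f2 n)"
        by (rule sum.cong[OF refl], rule sum.swap)
      finally show ?thesis .
    qed
    show ?thesis by (simp only: sum_distrib_left[symmetric] sw)
  qed
  also have "\<dots> = c * (\<Sum>f1\<in>{1..N}. \<Sum>f2\<in>{1..N}. Tf a1 a2 f1 f2 * Qm N (lcm f1 f2))"
    unfolding Qm_def by (simp add: sum_distrib_left)
  finally show ?thesis unfolding c_def .
qed



lemma hfun_summable_sub: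
  assumes "A \<subseteq> {1..} \<times> {1..}"
  shows "hfun summable_on A"
proof -
  have "hfun summable_on ({1..} \<times> {1..})" using hfun_abs_summable by (rule abs_summable_summable)
  thus ?thesis using assms by (rule summable_on_subset_banach)
qed

lemma H_split:
  "infsum hfun (Fc a1 a2) = (\<Sum>f1\<in>{1..N}. \<Sum>f2\<in>{1..N}. Tf a1 a2 f1 f2 / real (lcm f1 f2))
      + infsum hfun (Fc a1 a2 - {1..N} \<times> {1..N})"
proof -
  define B where "B = {1..N} \<times> {1..N}"
  have Fsub: "Fc a1 a2 \<subseteq> {1..} \<times> {1..}" unfolding Fc_def by auto
  have eq: "Fc a1 a2 = (Fc a1 a2 \<inter> B) \<union> (Fc a1 a2 - B)" by auto
  have finB: "finite (Fc a1 a2 \<inter> B)" unfolding B_def by auto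
  have "infsum hfun (Fc a1 a2) = infsum hfun (Fc a1 a2 \<inter> B) + infsum hfun (Fc a1 a2 - B)"
    by (subst eq, rule infsum_Un_disjoint) (use Fsub in \<open>auto intro!: hfun_summable_sub\<close>)
  also have "infsum hfun (Fc a1 a2 \<inter> B) = sum hfun (Fc a1 a2 \<inter> B)" using finB by simp
  also have "Fc a1 a2 \<inter> B = {p\<in>B. p \<in> Fc a1 a2}" by auto
  also have "sum hfun {p\<in>B. p \<in> Fc a1 a2} = (\<Sum>p\<in>B. if p \<in> Fc a1 a2 then hfun p else 0)"
    unfolding B_def by (rule sum.inter_filter) auto
  also have "\<dots> = (\<Sum>f1\<in>{1..N}. \<Sum>f2\<in>{1..N}. if (f1, f2) \<in> Fc a1 a2 then hfun (f1, f2) else 0)"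
    unfolding B_def by (subst sum.cartesian_product) simp
  also have "\<dots> = (\<Sum>f1\<in>{1..N}. \<Sum>f2\<in>{1..N}. Tf a1 a2 f1 f2 / real (lcm f1 f2))"
    by (intro sum.cong refl) (auto simp: Fc_def Tf_def hfun_def)
  finally show ?thesis unfolding B_def .
qed

lemma R_bound:
  assumes "N \<ge> 1"
  shows "\<bar>infsum hfun (Fc a1 a2 - {1..N} \<times> {1..N})\<bar> \<le> 2 * ((4 + ln (real N)) / real N)"
proof -
  define A where "A = Fc a1 a2 - {1..N} \<times> {1..N}"
  have Asub: "A \<subseteq> {1..} \<times> {1..} - {1..N} \<times> {1..N}" unfolding A_def Fc_def by auto
  have nsum: "(\<lambda>p. norm (hfun p)) summable_on A"
  proof -
    have "(\<lambda>p. norm (hfun p)) summable_on ({1..} \<times> {1..})" using hfun_abs_summable by simp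
    thus ?thesis by (rule summable_on_subset_banach) (use Asub in auto)
  qed
  have "norm (infsum hfun A) \<le> infsum (\<lambda>p. norm (hfun p)) A"
    by (rule norm_infsum_bound) (use nsum in simp)
  also have "\<dots> \<le> 2 * ((4 + ln (real N)) / real N)"
  proof (rule infsum_le_finite_sums[OF nsum])
    fix F assume F: "finite F" "F \<subseteq> A"
    have "(\<Sum>p\<in>F. norm (hfun p)) \<le> (\<Sum>p\<in>F. kmaj (fst p) (snd p))"
      using F Asub by (intro sum_mono hfun_bound) auto
    also have "\<dots> \<le> 2 * ((4 + ln (real N)) / real N)"
      using F Asub assms by (intro kmaj_tail_bound) auto
    finally show "(\<Sum>p\<in>F. norm (hfun p)) \<le> 2 * ((4 + ln (real N)) / real N)" .
  qed
  finally show ?thesis unfolding A_def by simp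
qed

lemma Tf_bound: "\<bar>Tf a1 a2 f1 f2\<bar> \<le> 1 / (real f1 * real f2)"
proof -
  have "\<bar>real_of_int (mobius f1 * mobius f2)\<bar> \<le> 1"
    using abs_mobius_le[of f1] abs_mobius_le[of f2] by (simp add: abs_mult mult_le_one)
  thus ?thesis unfolding Tf_def by (auto simp: abs_mult divide_right_mono)
qed



lemma ln2_ge: "ln (2::real) \<ge> 1/2"
proof -
  have "ln (1/2::real) \<le> 1/2 - 1" by (rule ln_le_minus_one) auto
  moreover have "ln (1/2::real) = - ln 2" by (simp add: ln_div)
  ultimately show ?thesis by simp
qed

lemma main_bound:
  assumes a: "a1 \<ge> 1" "a2 \<ge> 1" and x: "x \<ge> 2"
  shows "\<bar>(\<Sum>n\<in>{1..nat \<lfloor>x\<rfloor>}. real (totient (a1 * n) * totient (a2 * n))) - C1 a1 a2 * x ^ 3\<bar>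
     \<le> 40 * real (a1 * a2) * x\<^sup>2 * (ln x)\<^sup>2"
proof -
  define N where "N = nat \<lfloor>x\<rfloor>"
  define c where "c = real (totient a1) * real (totient a2)"
  define H where "H = infsum hfun (Fc a1 a2)"
  define R where "R = infsum hfun (Fc a1 a2 - {1..N} \<times> {1..N})"
  define L where "L = ln x"
  define E1 where "E1 = (\<Sum>f1\<in>{1..N}. \<Sum>f2\<in>{1..N}. Tf a1 a2 f1 f2 * (Qm N (lcm f1 f2) - x^3 / (3 * real (lcm f1 f2))))"
  have a0: "real a1 > 0" "real a2 > 0" using a by auto
  have Nx: "real N \<le> x" "x < real N + 1" unfolding N_def using x by linarith+
  have N1: "N \<ge> 1" using Nx x by linarith
  have Nhalf: "real N \<ge> x / 2" using Nx x by linarith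
  have Npos: "real N > 0" using N1 by simp
  have lnN: "ln (real N) \<le> L" "ln (real N) \<ge> 0" unfolding L_def using Nx N1 by auto
  have L2: "L \<ge> 1/2"
  proof -
    have "ln 2 \<le> ln x" using x by simp
    thus ?thesis using ln2_ge unfolding L_def by linarith
  qed
  have c0: "c \<ge> 0" unfolding c_def by simp
  have cle: "c \<le> real (a1 * a2)"
  proof -
    have "real (totient a1) \<le> real a1" "real (totient a2) \<le> real a2" by (simp_all add: totient_le)
    hence "c \<le> real a1 * real a2" unfolding c_def by (intro mult_mono) auto
    thus ?thesis by simp
  qed
  have C1eq: "C1 a1 a2 = c * H / 3"
  proof -
    have "infsum (C1_term a1 a2) ({1..} \<times> {1..}) = real (totient a1) / real a1 * (real (totient a2) / real a2) * H"
      unfolding H_def by (rule infsumI[OF C1_reindex[OF a]])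
    thus ?thesis unfolding C1_def c_def using a0 by (simp add: field_simps)
  qed
  have Seq: "(\<Sum>n\<in>{1..N}. real (totient (a1 * n) * totient (a2 * n)))
      = c * (\<Sum>f1\<in>{1..N}. \<Sum>f2\<in>{1..N}. Tf a1 a2 f1 f2 * Qm N (lcm f1 f2))"
    unfolding c_def by (rule S_formula[OF a])
  have Heq: "H = (\<Sum>f1\<in>{1..N}. \<Sum>f2\<in>{1..N}. Tf a1 a2 f1 f2 / real (lcm f1 f2)) + R"
    unfolding H_def R_def by (rule H_split)
  have diff: "(\<Sum>n\<in>{1..N}. real (totient (a1 * n) * totient (a2 * n))) - C1 a1 a2 * x ^ 3
      = c * E1 - c * (x^3 / 3) * R"
  proof -
    have "(\<Sum>f1\<in>{1..N}. \<Sum>f2\<in>{1..N}. Tf a1 a2 f1 f2 * Qm N (lcm f1 f2))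
        - x^3 / 3 * (\<Sum>f1\<in>{1..N}. \<Sum>f2\<in>{1..N}. Tf a1 a2 f1 f2 / real (lcm f1 f2)) = E1"
      unfolding E1_def sum_distrib_left sum_subtractf[symmetric]
      by (intro sum.cong refl) (simp add: field_simps)
    thus ?thesis unfolding Seq C1eq Heq by (simp add: algebra_simps)
  qed
  have E1b: "\<bar>E1\<bar> \<le> x^2 * (1 + L)^2"
  proof -
    have "\<bar>E1\<bar> \<le> (\<Sum>f1\<in>{1..N}. \<Sum>f2\<in>{1..N}. \<bar>Tf a1 a2 f1 f2 * (Qm N (lcm f1 f2) - x^3 / (3 * real (lcm f1 f2)))\<bar>)"
      unfolding E1_def by (rule order.trans[OF sum_abs sum_mono]) (rule sum_abs)
    also have "\<dots> \<le> (\<Sum>f1\<in>{1..N}. \<Sum>f2\<in>{1..N}. 1 / (real f1 * real f2) * x^2)"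
    proof (intro sum_mono)
      fix f1 f2 assume f: "f1 \<in> {1..N}" "f2 \<in> {1..N}"
      have l1: "lcm f1 f2 \<ge> 1" using f by (simp add: Suc_le_eq lcm_pos_nat)
      have "\<bar>Qm N (lcm f1 f2) - x^3 / (3 * real (lcm f1 f2))\<bar> \<le> x^2"
        unfolding Qm_def N_def using Q_err[OF l1, of x] x by simp
      thus "\<bar>Tf a1 a2 f1 f2 * (Qm N (lcm f1 f2) - x^3 / (3 * real (lcm f1 f2)))\<bar> \<le> 1 / (real f1 * real f2) * x^2"
        unfolding abs_mult using Tf_bound by (intro mult_mono) auto
    qed
    also have "\<dots> = x^2 * ((\<Sum>f\<in>{1..N}. 1 / real f) * (\<Sum>f\<in>{1..N}. 1 / real f))"
      by (simp add: sum_product sum_distrib_left algebra_simps)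
    also have "\<dots> \<le> x^2 * ((1 + L) * (1 + L))"
    proof -
      have hb: "(\<Sum>f\<in>{1..N}. 1 / real f) \<le> 1 + L" using harm_bound[OF N1] lnN by linarith
      have "(\<Sum>f\<in>{1..N}. 1 / real f) \<ge> 0" by (intro sum_nonneg) auto
      thus ?thesis using hb by (intro mult_left_mono mult_mono) auto
    qed
    finally show ?thesis by (simp add: power2_eq_square)
  qed
  have Rb: "\<bar>R\<bar> \<le> 2 * ((4 + L) / real N)"
  proof -
    have "\<bar>R\<bar> \<le> 2 * ((4 + ln (real N)) / real N)" unfolding R_def by (rule R_bound[OF N1])
    also have "\<dots> \<le> 2 * ((4 + L) / real N)" using lnN Npos by (intro mult_left_mono divide_right_mono) auto
    finally show ?thesis .
  qed
  have Rb2: "x^3 / 3 * \<bar>R\<bar> \<le> 4 / 3 * x^2 * (4 + L)"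
  proof -
    have "x^3 / 3 * \<bar>R\<bar> \<le> x^3 / 3 * (2 * ((4 + L) / real N))"
      using Rb x by (intro mult_left_mono) auto
    also have "\<dots> \<le> x^3 / 3 * (2 * ((4 + L) / (x / 2)))"
      using Nhalf x L2 by (intro mult_left_mono divide_left_mono) auto
    also have "\<dots> = 4 / 3 * x^2 * (4 + L)" using x by (simp add: field_simps power2_eq_square power3_eq_cube)
    finally show ?thesis .
  qed
  have "\<bar>c * E1 - c * (x^3 / 3) * R\<bar> \<le> c * \<bar>E1\<bar> + c * (x^3 / 3 * \<bar>R\<bar>)"
    using c0 x by (simp add: abs_mult abs_triangle_ineq4 order.trans[OF abs_triangle_ineq4] mult.assoc)
  also have "\<dots> \<le> c * (x^2 * (1 + L)^2) + c * (4 / 3 * x^2 * (4 + L))"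
    using E1b Rb2 c0 by (intro add_mono mult_left_mono) auto
  also have "\<dots> = c * x^2 * ((1 + L)^2 + 4 / 3 * (4 + L))" by (simp add: algebra_simps)
  also have "\<dots> \<le> real (a1 * a2) * x^2 * (40 * L^2)"
  proof -
    have "(1 + L)^2 \<le> 9 * L^2"
    proof -
      have "1 + L \<le> 3 * L" using L2 by simp
      hence "(1 + L)^2 \<le> (3 * L)^2" using L2 by (intro power_mono) auto
      thus ?thesis by (simp add: power2_eq_square)
    qed
    moreover have "4 + L \<le> 18 * L^2"
    proof -
      have "L \<le> 2 * L^2" using L2 by (simp add: power2_eq_square)
      thus ?thesis using L2 by simp
    qed
    moreover have "L^2 \<ge> 0" by simp
    moreover have gen: "\<And>u v w :: real. u \<le> 9 * w \<Longrightarrow> v \<le> 18 * w \<Longrightarrow> 0 \<le> w \<Longrightarrow> u + 4 / 3 * v \<le> 40 * w"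
      by linarith
    ultimately have k: "(1 + L)^2 + 4 / 3 * (4 + L) \<le> 40 * L^2" by blast
    have "c * x^2 * ((1 + L)^2 + 4 / 3 * (4 + L)) \<le> c * x^2 * (40 * L^2)"
      using k c0 by (intro mult_left_mono) auto
    also have "\<dots> \<le> real (a1 * a2) * x^2 * (40 * L^2)"
      using cle by (intro mult_right_mono) auto
    finally show ?thesis .
  qed
  finally show ?thesis unfolding diff[unfolded N_def, symmetric] L_def N_def by (simp add: algebra_simps)
qed


lemma sigma_ge:
  assumes "n \<ge> 1"
  shows "real n \<le> real (divisor_sigma n)"
proof -
  have fin: "finite {d. d dvd n}" using assms by (intro finite_divisors_nat) auto
  have "(\<lambda>d. d) n \<le> sum (\<lambda>d. d) {d. d dvd n}" by (rule member_le_sum) (use fin in auto)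
  hence "n \<le> divisor_sigma n" unfolding divisor_sigma_def by simp
  thus ?thesis by (simp only: of_nat_le_iff)
qed

theorem lemma3p4:
  shows "(\<forall>a1 a2 :: nat. a1 \<ge> 1 \<longrightarrow> a2 \<ge> 1 \<longrightarrow>
            Infinite_Sum.abs_summable_on (C1_term a1 a2) ({1..} \<times> {1..})) \<and>
         (\<exists>C :: real. C > 0 \<and>
            (\<forall>a1 a2 :: nat. \<forall>x :: real. a1 \<ge> 1 \<longrightarrow> a2 \<ge> 1 \<longrightarrow> x \<ge> 2 \<longrightarrow>
              abs ((\<Sum>n\<in>{1..nat \<lfloor>x\<rfloor>}. real (totient (a1 * n) * totient (a2 * n)))
                 - C1 a1 a2 * x ^ 3)
              \<le> C * real (divisor_sigma (a1 * a2)) * x\<^sup>2 * (ln x)\<^sup>2))"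
proof (intro conjI allI impI)
  fix a1 a2 :: nat assume "a1 \<ge> 1" "a2 \<ge> 1"
  thus "Infinite_Sum.abs_summable_on (C1_term a1 a2) ({1..} \<times> {1..})"
    by (rule C1_term_abs_summable)
next
  show "\<exists>C :: real. C > 0 \<and>
            (\<forall>a1 a2 :: nat. \<forall>x :: real. a1 \<ge> 1 \<longrightarrow> a2 \<ge> 1 \<longrightarrow> x \<ge> 2 \<longrightarrow>
              abs ((\<Sum>n\<in>{1..nat \<lfloor>x\<rfloor>}. real (totient (a1 * n) * totient (a2 * n)))
                 - C1 a1 a2 * x ^ 3)
              \<le> C * real (divisor_sigma (a1 * a2)) * x\<^sup>2 * (ln x)\<^sup>2)"
  proof (intro exI[of _ 40] conjI allI impI)
    fix a1 a2 :: nat and x :: real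
    assume a: "a1 \<ge> 1" "a2 \<ge> 1" and x: "x \<ge> 2"
    have "abs ((\<Sum>n\<in>{1..nat \<lfloor>x\<rfloor>}. real (totient (a1 * n) * totient (a2 * n))) - C1 a1 a2 * x ^ 3)
        \<le> 40 * real (a1 * a2) * x\<^sup>2 * (ln x)\<^sup>2" by (rule main_bound[OF a x])
    also have "\<dots> \<le> 40 * real (divisor_sigma (a1 * a2)) * x\<^sup>2 * (ln x)\<^sup>2"
    proof -
      have "a1 * a2 \<ge> 1" using a by simp
      hence "real (a1 * a2) \<le> real (divisor_sigma (a1 * a2))" by (rule sigma_ge)
      thus ?thesis by (intro mult_right_mono) auto
    qed
    finally show "abs ((\<Sum>n\<in>{1..nat \<lfloor>x\<rfloor>}. real (totient (a1 * n) * totient (a2 * n))) - C1 a1 a2 * x ^ 3)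
        \<le> 40 * real (divisor_sigma (a1 * a2)) * x\<^sup>2 * (ln x)\<^sup>2" .
  qed simp
qed

end
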